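(* Let $G$ be a graph with $n\geq 1$ vertices and minimum degree $\delta$, and let $t\geq 1$ be an integer with $2\delta-n\geq t-2$. Then $G$ contains every 2-degenerate graph on $t$ vertices as a subgraph.
   Context: All graphs are finite and simple. A graph is 2-degenerate if every non-empty subgraph of it has a vertex of degree at most 2. *)

theory Defs
  imports Main
begin

definition fin_graph :: "'a set \<Rightarrow> ('a \<Rightarrow> 'a \<Rightarrow> bool) \<Rightarrow> bool" where
  "fin_graph V E \<longleftrightarrow> finite V \<and> (\<forall>x y. E x y \<longrightarrow> x \<in> V \<and> y \<in> V)
     \<and> (\<forall>x y. E x y \<longrightarrow> E y x) \<and> (\<forall>x. \<not> E x x)"

definition degree :: "'a set \<Rightarrow> ('a \<Rightarrow> 'a \<Rightarrow> bool) \<Rightarrow> 'a \<Rightarrow> nat" where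
  "degree V E v = card {u \<in> V. E v u}"

definition min_degree :: "'a set \<Rightarrow> ('a \<Rightarrow> 'a \<Rightarrow> bool) \<Rightarrow> nat" where
  "min_degree V E = Min (degree V E ` V)"

definition is_subgraph :: "'a set \<Rightarrow> ('a \<Rightarrow> 'a \<Rightarrow> bool) \<Rightarrow> 'a set \<Rightarrow> ('a \<Rightarrow> 'a \<Rightarrow> bool) \<Rightarrow> bool" where
  "is_subgraph V' E' V E \<longleftrightarrow> fin_graph V' E' \<and> V' \<subseteq> V \<and> (\<forall>x y. E' x y \<longrightarrow> E x y)"

definition two_degenerate :: "'a set \<Rightarrow> ('a \<Rightarrow> 'a \<Rightarrow> bool) \<Rightarrow> bool" where
  "two_degenerate V E \<longleftrightarrow>
     (\<forall>V' E'. is_subgraph V' E' V E \<and> V' \<noteq> {} \<longrightarrow> (\<exists>v\<in>V'. degree V' E' v \<le> 2))"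

definition contains_subgraph ::
  "'a set \<Rightarrow> ('a \<Rightarrow> 'a \<Rightarrow> bool) \<Rightarrow> 'b set \<Rightarrow> ('b \<Rightarrow> 'b \<Rightarrow> bool) \<Rightarrow> bool" where
  "contains_subgraph VG EG VH EH \<longleftrightarrow>
     (\<exists>f. inj_on f VH \<and> f ` VH \<subseteq> VG \<and>
          (\<forall>x\<in>VH. \<forall>y\<in>VH. EH x y \<longrightarrow> EG (f x) (f y)))"

end

theory Submission
  imports Defs
begin

lemma G_ext:
  fixes VG :: "'a set" and EG :: "'a \<Rightarrow> 'a \<Rightarrow> bool"
  assumes G: "fin_graph VG EG" and n: "card VG \<ge> 1" and t: "t \<ge> 1"
    and md: "2 * int (min_degree VG EG) - int (card VG) \<ge> int t - 2"
    and S: "S \<subseteq> VG" "card S \<le> t - 1" and A: "A \<subseteq> S" "card A \<le> 2"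
  shows "\<exists>w\<in>VG - S. \<forall>a\<in>A. EG a w"
proof -
  define d where "d = min_degree VG EG"
  define N where "N = (\<lambda>a. {u\<in>VG. EG a u})"
  have fin: "finite VG" using G by (simp add: fin_graph_def)
  have ne: "VG \<noteq> {}" using n by auto
  have irr: "\<And>x. \<not> EG x x" using G by (simp add: fin_graph_def)
  have dle: "\<And>a. a \<in> VG \<Longrightarrow> d \<le> card (N a)"
    unfolding d_def min_degree_def N_def degree_def[symmetric]
    using fin by (intro Min_le) auto
  obtain v where v: "v \<in> VG" using ne by auto
  have "card (N v) \<le> card (VG - {v})"
    by (rule card_mono) (use fin irr in \<open>auto simp: N_def\<close>)
  moreover have "card (VG - {v}) = card VG - 1" using v fin by simp
  moreover have "card VG \<ge> 1" using n .
  ultimately have "d + 1 \<le> card VG" using dle[OF v] by linarith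
  hence tn: "t \<le> card VG" and td: "t \<le> d + 1" using md unfolding d_def[symmetric] by linarith+
  have finS: "finite S" using S fin finite_subset by blast
  have finA: "finite A" using A finS finite_subset by blast
  have "card A = 0 \<or> card A = 1 \<or> card A = 2" using A by auto
  moreover
  { assume "card A = 0"
    hence "A = {}" using finA by simp
    moreover have "VG - S \<noteq> {}"
    proof
      assume "VG - S = {}" hence "VG \<subseteq> S" by auto
      hence "card VG \<le> card S" using finS card_mono by blast
      thus False using S tn t by linarith
    qed
    ultimately have ?thesis by auto }
  moreover
  { assume "card A = 1"
    then obtain a where a: "A = {a}" by (auto simp: card_1_singleton_iff)
    have aS: "a \<in> S" using a A by auto
    have "N a - S \<noteq> {}"
    proof
      assume "N a - S = {}" hence "N a \<subseteq> S - {a}" using irr by (auto simp: N_def)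
      hence "card (N a) \<le> card (S - {a})" using finS card_mono by blast
      also have "\<dots> = card S - 1" using aS finS by simp
      moreover have "a \<in> VG" using aS S by auto
      moreover have "card S \<ge> 1" using aS finS by (metis One_nat_def Suc_leI card_gt_0_iff empty_iff)
      ultimately show False using dle[of a] S td t by linarith
    qed
    hence ?thesis using a by (auto simp: N_def) }
  moreover
  { assume "card A = 2"
    then obtain a b where ab: "A = {a,b}" "a \<noteq> b" by (auto simp: card_2_iff)
    have aS: "a \<in> S" "b \<in> S" using ab A by auto
    have f1: "finite (N a)" "finite (N b)" using fin by (auto simp: N_def)
    have "card (N a \<union> N b) \<le> card VG" using fin by (intro card_mono) (auto simp: N_def)
    moreover have "card (N a) + card (N b) = card (N a \<union> N b) + card (N a \<inter> N b)"
      using card_Un_Int f1 by blast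
    ultimately have c: "int (card (N a \<inter> N b)) \<ge> 2 * int d - int (card VG)"
    proof -
      assume h: "card (N a \<union> N b) \<le> card VG" "card (N a) + card (N b) = card (N a \<union> N b) + card (N a \<inter> N b)"
      have "a \<in> VG" "b \<in> VG" using aS S by auto
      hence "d \<le> card (N a)" "d \<le> card (N b)" using dle by auto
      thus ?thesis using h by linarith
    qed
    have "N a \<inter> N b - S \<noteq> {}"
    proof
      assume "N a \<inter> N b - S = {}" hence "N a \<inter> N b \<subseteq> S - {a,b}" using irr by (auto simp: N_def)
      hence "card (N a \<inter> N b) \<le> card (S - {a,b})" using finS card_mono by blast
      also have "\<dots> = card S - 2" using aS finS ab by (simp add: card_Diff_subset)
      moreover have "card {a,b} \<le> card S" using aS finS by (intro card_mono) auto
      ultimately have "int (card (N a \<inter> N b)) + 2 \<le> int (card S)" using ab by simp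
      thus False using c md S t unfolding d_def[symmetric] by linarith
    qed
    hence ?thesis using ab by (auto simp: N_def) }
  ultimately show ?thesis by blast
qed

lemma embed:
  fixes VG :: "'a set" and EG :: "'a \<Rightarrow> 'a \<Rightarrow> bool"
  assumes G: "fin_graph VG EG"
    and ext: "\<And>S A. S \<subseteq> VG \<Longrightarrow> card S \<le> t - 1 \<Longrightarrow> A \<subseteq> S \<Longrightarrow> card A \<le> 2 \<Longrightarrow> \<exists>w\<in>VG - S. \<forall>a\<in>A. EG a w"
  shows "fin_graph VH EH \<Longrightarrow> two_degenerate VH EH \<Longrightarrow> card VH \<le> t \<Longrightarrow> contains_subgraph VG EG VH EH"
proof (induction "card VH" arbitrary: VH EH)
  case 0
  hence "VH = {}" by (simp add: fin_graph_def)
  thus ?case by (simp add: contains_subgraph_def)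
next
  case (Suc m)
  have finH: "finite VH" and Hin: "\<And>x y. EH x y \<Longrightarrow> x \<in> VH \<and> y \<in> VH"
    and Hsym: "\<And>x y. EH x y \<Longrightarrow> EH y x" and Hirr: "\<And>x. \<not> EH x x"
    using Suc.prems(1) by (auto simp: fin_graph_def)
  have "VH \<noteq> {}" using Suc.hyps(2) by auto
  moreover have "is_subgraph VH EH VH EH" using Suc.prems(1) by (simp add: is_subgraph_def)
  ultimately obtain v where v: "v \<in> VH" and dv: "degree VH EH v \<le> 2"
    using Suc.prems(2) unfolding two_degenerate_def by blast
  define EH' where "EH' = (\<lambda>x y. EH x y \<and> x \<noteq> v \<and> y \<noteq> v)"
  have g': "fin_graph (VH - {v}) EH'" using finH Hin Hsym Hirr
    by (auto simp: fin_graph_def EH'_def)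
  have td': "two_degenerate (VH - {v}) EH'"
    using Suc.prems(2) unfolding two_degenerate_def is_subgraph_def EH'_def by blast
  have c': "card (VH - {v}) = m" using Suc.hyps(2) v finH by simp
  obtain f where f: "inj_on f (VH - {v})" "f ` (VH - {v}) \<subseteq> VG"
    "\<And>x y. x \<in> VH - {v} \<Longrightarrow> y \<in> VH - {v} \<Longrightarrow> EH' x y \<Longrightarrow> EG (f x) (f y)"
    using Suc.hyps(1)[OF c'[symmetric] g' td'] Suc.prems(3) c' Suc.hyps(2)
    unfolding contains_subgraph_def by auto
  define N where "N = {u\<in>VH. EH v u}"
  have NV: "N \<subseteq> VH - {v}" using Hirr by (auto simp: N_def)
  have "finite N" using finH by (simp add: N_def)
  hence "card (f ` N) \<le> card N" by (rule card_image_le)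
  also have "card N \<le> 2" using dv by (simp add: N_def degree_def)
  finally have "card (f ` N) \<le> 2" .
  moreover have "card (f ` (VH - {v})) \<le> t - 1"
    using card_image_le[of "VH - {v}" f] finH c' Suc.hyps(2) Suc.prems(3) by auto
  ultimately obtain w where w: "w \<in> VG - f ` (VH - {v})" "\<And>u. u \<in> N \<Longrightarrow> EG (f u) w"
  proof -
    assume *: "card (f ` N) \<le> 2" "card (f ` (VH - {v})) \<le> t - 1"
    have "f ` N \<subseteq> f ` (VH - {v})" using NV by (rule image_mono)
    from ext[OF f(2) *(2) this *(1)] show ?thesis using that by blast
  qed
  have Gsym: "\<And>x y. EG x y \<Longrightarrow> EG y x" using G by (simp add: fin_graph_def)
  define g where "g = f(v := w)"
  have "inj_on g (insert v (VH - {v}))" unfolding g_def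
    using f(1) w(1) by (auto simp: inj_on_def)
  moreover have "insert v (VH - {v}) = VH" using v by auto
  ultimately have "inj_on g VH" by simp
  moreover have "g ` VH \<subseteq> VG" using f(2) w(1) by (auto simp: g_def)
  moreover have "\<forall>x\<in>VH. \<forall>y\<in>VH. EH x y \<longrightarrow> EG (g x) (g y)"
  proof (intro ballI impI)
    fix x y assume xy: "x \<in> VH" "y \<in> VH" "EH x y"
    show "EG (g x) (g y)"
    proof (cases "x = v")
      case True
      hence "y \<noteq> v" using xy Hirr by auto
      thus ?thesis using True xy w(2)[of y] Gsym by (auto simp: g_def N_def)
    next
      case False
      show ?thesis
      proof (cases "y = v")
        case True
        thus ?thesis using False xy w(2)[of x] Hsym by (auto simp: g_def N_def)
      next
        case False2: False
        thus ?thesis using False xy f(3)[of x y] by (auto simp: g_def EH'_def)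
      qed
    qed
  qed
  ultimately show ?case unfolding contains_subgraph_def by blast
qed

theorem lemma10:
  fixes VG :: "'a set" and EG :: "'a \<Rightarrow> 'a \<Rightarrow> bool"
    and VH :: "'b set" and EH :: "'b \<Rightarrow> 'b \<Rightarrow> bool"
    and t :: nat
  assumes "fin_graph VG EG" and "card VG \<ge> 1"
    and "t \<ge> 1"
    and "2 * int (min_degree VG EG) - int (card VG) \<ge> int t - 2"
    and "fin_graph VH EH" and "two_degenerate VH EH" and "card VH = t"
  shows "contains_subgraph VG EG VH EH"
proof -
  have "card VH \<le> t" using assms(7) by simp
  thus ?thesis using embed[of VG EG t VH EH, OF assms(1) G_ext[OF assms(1-4)] assms(5-6)] by blast
qed

end
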